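(* Let $\mu>0$, $u_a\in\mathbb{R}$, $\alpha_\pm\ge0$, $u_-<u_+$, with Riemann data $(\alpha_0,u_0)=(\alpha_-,u_-)$ for $x<0$, $(\alpha_+,u_+)$ for $x>0$. With $u_l(t)=u_a+(u_--u_a)e^{-\mu t}$, $u_r(t)=u_a+(u_+-u_a)e^{-\mu t}$, $X_1(t)=u_at+\frac{(u_a-u_-)(e^{-\mu t}-1)}{\mu}$, $X_2(t)=u_at+\frac{(u_a-u_+)(e^{-\mu t}-1)}{\mu}$, $\overline u(x,t)=u_a+\frac{\mu(x-u_at)}{e^{\mu t}-1}$, the function $(\alpha,u)=(\alpha_-,u_l(t))$ for $x<X_1(t)$, $(0,\overline u)$ for $X_1(t)\le x\le X_2(t)$, $(\alpha_+,u_r(t))$ for $x>X_2(t)$ is a weak solution of the Eulerian droplet model with these data (a two-contact-discontinuity containing a vacuum state).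
   Context: The Eulerian droplet model: $\partial_t\alpha+\partial_x(\alpha u)=0$, $\partial_t(\alpha u)+\partial_x(\alpha u^2)=\mu\alpha(u_a-u)$. Weak solution: for all $\psi\in\mathcal{C}_0^\infty(\mathbb{R}\times[0,\infty))$, $\int_0^\infty\int(\alpha\psi_t+\alpha u\psi_x)dx\,dt=-\int\alpha_0\psi(x,0)dx$ and $\int_0^\infty\int(\alpha u\psi_t+\alpha u^2\psi_x+\mu\alpha(u_a-u)\psi)dx\,dt=-\int\alpha_0u_0\psi(x,0)dx$. *)

theory Defs
  imports "HOL-Analysis.Analysis"
begin

definition partial_x :: "(real \<times> real \<Rightarrow> real) \<Rightarrow> real \<times> real \<Rightarrow> real" where
  "partial_x f p = deriv (\<lambda>y. f (y, snd p)) (fst p)"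

definition partial_t :: "(real \<times> real \<Rightarrow> real) \<Rightarrow> real \<times> real \<Rightarrow> real" where
  "partial_t f p = deriv (\<lambda>s. f (fst p, s)) (snd p)"

fun iter_partial :: "bool list \<Rightarrow> (real \<times> real \<Rightarrow> real) \<Rightarrow> real \<times> real \<Rightarrow> real" where
  "iter_partial [] f = f"
| "iter_partial (d # ds) f = (if d then partial_x else partial_t) (iter_partial ds f)"

definition smooth2 :: "(real \<times> real \<Rightarrow> real) \<Rightarrow> bool" where
  "smooth2 f \<longleftrightarrow> (\<forall>ds. continuous_on UNIV (iter_partial ds f)
      \<and> (\<forall>x t. (\<lambda>y. iter_partial ds f (y, t)) differentiable (at x))
      \<and> (\<forall>x t. (\<lambda>s. iter_partial ds f (x, s)) differentiable (at t)))"

text \<open>Test functions in C_0^infinity(R x [0,infinity)): restrictions to the closed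
  upper half plane of smooth compactly supported functions on the plane.\<close>
definition test_fun :: "(real \<times> real \<Rightarrow> real) \<Rightarrow> bool" where
  "test_fun \<psi> \<longleftrightarrow> smooth2 \<psi> \<and> bounded {p. \<psi> p \<noteq> 0}"

definition weak_solution ::
  "real \<Rightarrow> real \<Rightarrow> (real \<Rightarrow> real) \<Rightarrow> (real \<Rightarrow> real)
    \<Rightarrow> (real \<times> real \<Rightarrow> real) \<Rightarrow> (real \<times> real \<Rightarrow> real) \<Rightarrow> bool" where
  "weak_solution \<mu> ua \<alpha>0 u0 \<alpha> u \<longleftrightarrow>
    (\<forall>\<psi>. test_fun \<psi> \<longrightarrow>
      set_lebesgue_integral lborel (UNIV \<times> {0..})
        (\<lambda>p. \<alpha> p * partial_t \<psi> p + \<alpha> p * u p * partial_x \<psi> p)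
        = - (LINT x | lborel. \<alpha>0 x * \<psi> (x, 0))
    \<and> set_lebesgue_integral lborel (UNIV \<times> {0..})
        (\<lambda>p. \<alpha> p * u p * partial_t \<psi> p + \<alpha> p * (u p)\<^sup>2 * partial_x \<psi> p
              + \<mu> * \<alpha> p * (ua - u p) * \<psi> p)
        = - (LINT x | lborel. \<alpha>0 x * u0 x * \<psi> (x, 0)))"

end

theory Submission
  imports Defs
begin

lemma smooth2_D:
  assumes "smooth2 \<psi>"
  shows "continuous_on UNIV \<psi>" "continuous_on UNIV (partial_x \<psi>)" "continuous_on UNIV (partial_t \<psi>)"
    "\<And>x t. ((\<lambda>y. \<psi> (y, t)) has_real_derivative partial_x \<psi> (x, t)) (at x)"
    "\<And>x t. ((\<lambda>s. \<psi> (x, s)) has_real_derivative partial_t \<psi> (x, t)) (at t)"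
proof -
  have a: "\<And>ds. continuous_on UNIV (iter_partial ds \<psi>)
      \<and> (\<forall>x t. (\<lambda>y. iter_partial ds \<psi> (y, t)) differentiable (at x))
      \<and> (\<forall>x t. (\<lambda>s. iter_partial ds \<psi> (x, s)) differentiable (at t))"
    using assms unfolding smooth2_def by blast
  show "continuous_on UNIV \<psi>" using a[of "[]"] by simp
  show "continuous_on UNIV (partial_x \<psi>)" using a[of "[True]"] by simp
  show "continuous_on UNIV (partial_t \<psi>)" using a[of "[False]"] by simp
  show "((\<lambda>y. \<psi> (y, t)) has_real_derivative partial_x \<psi> (x, t)) (at x)" for x t
    using a[of "[]"] unfolding partial_x_def
    by (simp add: DERIV_deriv_iff_real_differentiable)
  show "((\<lambda>s. \<psi> (x, s)) has_real_derivative partial_t \<psi> (x, t)) (at t)" for x t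
    using a[of "[]"] unfolding partial_t_def
    by (simp add: DERIV_deriv_iff_real_differentiable)
qed

lemma psi_frechet:
  assumes "smooth2 \<psi>"
  shows "(\<psi> has_derivative (\<lambda>(a, b). partial_x \<psi> q * a + partial_t \<psi> q * b)) (at q)"
proof -
  obtain x y where q: "q = (x, y)" by (cases q)
  note D = smooth2_D[OF assms]
  have fx: "((\<lambda>a. \<psi> (a, y)) has_derivative (*) (partial_x \<psi> (x, y))) (at x within UNIV)"
    using D(4)[of y x] by (simp add: has_field_derivative_def mult.commute)
  have fy: "((\<lambda>b. \<psi> (a, b)) has_derivative blinfun_apply (blinfun_mult_right (partial_t \<psi> (a, b)))) (at b within UNIV)" for a b
    using D(5)[of a b] by (simp add: has_field_derivative_def mult.commute)
  have cont: "continuous (at (x, y) within UNIV \<times> UNIV) (\<lambda>(a, b). blinfun_mult_right (partial_t \<psi> (a, b)))"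
  proof -
    have "continuous_on UNIV (\<lambda>p. blinfun_mult_right (partial_t \<psi> p))"
      by (intro continuous_on_compose2[OF _ D(3)] linear_continuous_on bounded_linear_blinfun_mult_right) auto
    then show ?thesis by (simp add: case_prod_beta' continuous_on_eq_continuous_within)
  qed
  have "((\<lambda>(a, b). \<psi> (a, b)) has_derivative (\<lambda>(ta, tb). partial_x \<psi> (x, y) * ta + blinfun_apply (blinfun_mult_right (partial_t \<psi> (x, y))) tb)) (at (x, y) within UNIV \<times> UNIV)"
    by (rule has_derivative_partialsI[OF fx fy cont]) auto
  then show ?thesis by (simp add: q)
qed


lemma psi_chain:
  assumes "smooth2 \<psi>" and dX: "(X has_real_derivative v) (at t)"
  shows "((\<lambda>s. \<psi> (y + X s, s)) has_real_derivative
           (partial_t \<psi> (y + X t, t) + v * partial_x \<psi> (y + X t, t))) (at t)"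
proof -
  have d1: "((\<lambda>s. (y + X s, s)) has_derivative (\<lambda>h. (v * h, h))) (at t)"
  proof -
    have dX': "(X has_derivative (*) v) (at t)" using dX unfolding has_field_derivative_def .
    have "((\<lambda>s. y + X s) has_derivative (*) v) (at t)"
      using has_derivative_add[OF has_derivative_const[of y] dX'] by simp
    from has_derivative_Pair[OF this has_derivative_ident] show ?thesis by simp
  qed
  have d2: "(\<psi> has_derivative (\<lambda>(a, b). partial_x \<psi> (y + X t, t) * a + partial_t \<psi> (y + X t, t) * b)) (at (y + X t, t))"
    by (rule psi_frechet[OF assms(1)])
  have "((\<psi> \<circ> (\<lambda>s. (y + X s, s))) has_derivative
      ((\<lambda>(a, b). partial_x \<psi> (y + X t, t) * a + partial_t \<psi> (y + X t, t) * b) \<circ> (\<lambda>h. (v * h, h)))) (at t)"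
    using diff_chain_at[OF d1 d2] by simp
  then have "((\<lambda>s. \<psi> (y + X s, s)) has_derivative
      (\<lambda>h. partial_x \<psi> (y + X t, t) * (v * h) + partial_t \<psi> (y + X t, t) * h)) (at t)"
    by (simp add: o_def)
  then show ?thesis unfolding has_field_derivative_def
    by (rule has_derivative_eq_rhs) (auto simp: fun_eq_iff algebra_simps o_def)
qed

lemma integrable_bdd_supp:
  fixes f h :: "'a::euclidean_space \<Rightarrow> real"
  assumes "f \<in> borel_measurable borel" "continuous_on UNIV h" "\<And>x. \<bar>f x\<bar> \<le> \<bar>h x\<bar>"
    "\<And>x. R < norm x \<Longrightarrow> f x = 0"
  shows "integrable lborel f"
proof -
  have I: "integrable lborel (\<lambda>x. indicator (cball 0 R) x *\<^sub>R h x)"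
    by (rule borel_integrable_compact) (auto intro: continuous_on_subset assms(2))
  show ?thesis
  proof (rule Bochner_Integration.integrable_bound[OF I])
    show "f \<in> borel_measurable lborel" using assms(1) by simp
    show "AE x in lborel. norm (f x) \<le> norm (indicator (cball 0 R) x *\<^sub>R h x)"
    proof (rule AE_I2)
      fix x
      show "norm (f x) \<le> norm (indicator (cball 0 R) x *\<^sub>R h x)"
        using assms(3)[of x] assms(4)[of x] by (cases "x \<in> cball 0 R") (auto simp: mem_cball_0)
    qed
  qed
qed


lemma deriv_zero_outside:
  assumes "smooth2 \<psi>" and z: "\<And>p. R < norm p \<Longrightarrow> \<psi> p = 0" and "R < norm p"
  shows "partial_x \<psi> p = 0" "partial_t \<psi> p = 0"
proof -
  obtain x t where p: "p = (x, t)" by (cases p)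
  note D = smooth2_D[OF assms(1)]
  have o1: "open {y. R < norm (y, t)}"
    by (rule open_Collect_less) (intro continuous_intros)+
  have "((\<lambda>y. \<psi> (y, t)) has_real_derivative 0) (at x)"
    by (rule has_field_derivative_transform_within_open[OF DERIV_const o1])
       (use assms(3) p z in auto)
  with D(4)[where x=x and t=t] show "partial_x \<psi> p = 0" using DERIV_unique p by blast
  have o2: "open {s. R < norm (x, s)}"
    by (rule open_Collect_less) (intro continuous_intros)+
  have "((\<lambda>s. \<psi> (x, s)) has_real_derivative 0) (at t)"
    by (rule has_field_derivative_transform_within_open[OF DERIV_const o2])
       (use assms(3) p z in auto)
  with D(5)[where x=x and t=t] show "partial_t \<psi> p = 0" using DERIV_unique p by blast
qed

lemma key:
  fixes \<psi> :: "real \<times> real \<Rightarrow> real" and X v g g' :: "real \<Rightarrow> real" and A :: "real set"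
  assumes tf: "test_fun \<psi>" and A[measurable]: "A \<in> sets borel" and X0: "X 0 = 0"
   and dX: "\<And>t. (X has_real_derivative v t) (at t)" and cv: "continuous_on UNIV v"
   and dg: "\<And>t. (g has_real_derivative g' t) (at t)" and cg': "continuous_on UNIV g'"
  defines "H \<equiv> \<lambda>p. g (snd p) * partial_t \<psi> p + g (snd p) * v (snd p) * partial_x \<psi> p + g' (snd p) * \<psi> p"
  defines "F \<equiv> \<lambda>p. indicator {0..} (snd p) * indicator A (fst p - X (snd p)) * H p"
  shows "integrable lborel F"
    "integrable lborel (\<lambda>x. indicator A x * \<psi> (x, 0))"
    "integral\<^sup>L lborel F = - g 0 * (LINT x|lborel. indicator A x * \<psi> (x, 0))"
proof -
  have sm: "smooth2 \<psi>" and bd: "bounded {p. \<psi> p \<noteq> 0}" using tf unfolding test_fun_def by auto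
  note D = smooth2_D[OF sm]
  obtain R0 where R0: "\<And>p. \<psi> p \<noteq> 0 \<Longrightarrow> norm p \<le> R0" using bd unfolding bounded_iff by auto
  define R where "R = max R0 0"
  have R: "\<And>p. \<psi> p \<noteq> 0 \<Longrightarrow> norm p \<le> R" "R \<ge> 0" using R0 unfolding R_def by force+
  have z: "\<And>p. R < norm p \<Longrightarrow> \<psi> p = 0" using R by force
  have zx: "\<And>p. R < norm p \<Longrightarrow> partial_x \<psi> p = 0" and zt: "\<And>p. R < norm p \<Longrightarrow> partial_t \<psi> p = 0"
    using deriv_zero_outside[OF sm z] by auto
  have zH: "\<And>p. R < norm p \<Longrightarrow> H p = 0" unfolding H_def using z zx zt by simp
  have cX: "continuous_on UNIV X"
    using dX by (metis DERIV_isCont continuous_at_imp_continuous_on)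
  have cg: "continuous_on UNIV g"
    using dg by (metis DERIV_isCont continuous_at_imp_continuous_on)
  have c1: "continuous_on UNIV (\<lambda>p::real\<times>real. g (snd p))"
    by (rule continuous_on_compose2[OF cg continuous_on_snd]) auto
  have c2: "continuous_on UNIV (\<lambda>p::real\<times>real. v (snd p))"
    by (rule continuous_on_compose2[OF cv continuous_on_snd]) auto
  have c3: "continuous_on UNIV (\<lambda>p::real\<times>real. g' (snd p))"
    by (rule continuous_on_compose2[OF cg' continuous_on_snd]) auto
  have cH: "continuous_on UNIV H"
    unfolding H_def by (intro continuous_intros c1 c2 c3 D(1,2,3))
  have cHX: "continuous_on UNIV (\<lambda>p. H (fst p + X (snd p), snd p))"
  proof (rule continuous_on_compose2[OF cH])
    have "continuous_on UNIV (\<lambda>p::real\<times>real. X (snd p))"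
      by (rule continuous_on_compose2[OF cX continuous_on_snd]) auto
    then show "continuous_on UNIV (\<lambda>p::real\<times>real. (fst p + X (snd p), snd p))"
      by (intro continuous_intros)
  qed auto
  have mH[measurable]: "H \<in> borel_measurable borel" by (rule borel_measurable_continuous_onI[OF cH])
  have mX[measurable]: "X \<in> borel_measurable borel" by (rule borel_measurable_continuous_onI[OF cX])
  have mpsi[measurable]: "\<psi> \<in> borel_measurable borel" by (rule borel_measurable_continuous_onI[OF D(1)])
  have mH2[measurable]: "H \<in> borel_measurable (borel \<Otimes>\<^sub>M borel)" using mH by (simp add: borel_prod)
  have mHX[measurable]: "(\<lambda>p. H (fst p + X (snd p), snd p)) \<in> borel_measurable borel"
    by (rule borel_measurable_continuous_onI[OF cHX])
  have ind01: "\<And>S (x::real). indicator S x = (0::real) \<or> indicator S x = (1::real)"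
    by (simp add: indicator_def)
  show intF: "integrable lborel F"
  proof (rule integrable_bdd_supp[where h=H and R=R])
    have "F \<in> borel_measurable (borel \<Otimes>\<^sub>M borel)" unfolding F_def by measurable
    then show "F \<in> borel_measurable borel" by (simp add: borel_prod)
    show "continuous_on UNIV H" by (rule cH)
    show "\<bar>F x\<bar> \<le> \<bar>H x\<bar>" for x unfolding F_def by (auto simp: indicator_def)
    show "R < norm x \<Longrightarrow> F x = 0" for x unfolding F_def using zH by simp
  qed
  show int1: "integrable lborel (\<lambda>x. indicator A x * \<psi> (x, 0))"
  proof (rule integrable_bdd_supp[where h="\<lambda>x. \<psi> (x, 0)" and R=R])
    show "(\<lambda>x. indicator A x * \<psi> (x, 0)) \<in> borel_measurable borel" by measurable
    show "continuous_on UNIV (\<lambda>x. \<psi> (x, 0))"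
      by (rule continuous_on_compose2[OF D(1)]) (auto intro: continuous_intros)
    show "\<bar>indicator A x * \<psi> (x, 0)\<bar> \<le> \<bar>\<psi> (x, 0)\<bar>" for x by (auto simp: indicator_def)
    show "R < norm x \<Longrightarrow> indicator A x * \<psi> (x, 0) = 0" for x using z[of "(x, 0)"] by (simp add: norm_Pair)
  qed

  define G where "G = (\<lambda>p. indicator {0..} (snd p) * indicator A (fst p) * H (fst p + X (snd p), snd p))"
  obtain M where M: "\<And>t. t \<in> {0..R} \<Longrightarrow> \<bar>X t\<bar> \<le> M"
  proof -
    have "compact (X ` {0..R})"
      by (rule compact_continuous_image[OF continuous_on_subset[OF cX]]) auto
    then obtain M where "\<forall>x\<in>X ` {0..R}. norm x \<le> M" using compact_imp_bounded bounded_iff by metis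
    then show ?thesis by (intro that[of M]) auto
  qed
  have mHX2[measurable]: "(\<lambda>p. H (fst p + X (snd p), snd p)) \<in> borel_measurable (borel \<Otimes>\<^sub>M borel)"
    using mHX by (simp add: borel_prod)
  have intG: "integrable lborel G"
  proof (rule integrable_bdd_supp[where h="\<lambda>p. H (fst p + X (snd p), snd p)" and R="2 * R + M"])
    have "G \<in> borel_measurable (borel \<Otimes>\<^sub>M borel)" unfolding G_def by measurable
    then show "G \<in> borel_measurable borel" by (simp add: borel_prod)
    show "continuous_on UNIV (\<lambda>p. H (fst p + X (snd p), snd p))" by (rule cHX)
    show "\<bar>G x\<bar> \<le> \<bar>H (fst x + X (snd x), snd x)\<bar>" for x unfolding G_def by (auto simp: indicator_def)
    show "G p = 0" if "2 * R + M < norm p" for p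
    proof (rule ccontr)
      assume "G p \<noteq> 0"
      then have t0: "snd p \<ge> 0" and Hn: "H (fst p + X (snd p), snd p) \<noteq> 0"
        unfolding G_def by (auto simp: indicator_def split: if_splits)
      have nr: "norm (fst p + X (snd p), snd p) \<le> R" using Hn zH by force
      have tR: "\<bar>snd p\<bar> \<le> R" using nr norm_snd_le[of "snd p" "fst p + X (snd p)"] by simp
      have "\<bar>fst p + X (snd p)\<bar> \<le> R" using nr norm_fst_le[of "fst p + X (snd p)" "snd p"] by simp
      moreover have "\<bar>X (snd p)\<bar> \<le> M" using M t0 tR by auto
      ultimately have "\<bar>fst p\<bar> \<le> R + M" by linarith
      moreover have "norm p \<le> \<bar>fst p\<bar> + \<bar>snd p\<bar>"
        using norm_Pair_le[of "fst p" "snd p"] by simp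
      ultimately show False using that tR by linarith
    qed
  qed
  have intF2: "integrable (lborel \<Otimes>\<^sub>M lborel) F" using intF by (simp add: lborel_prod)
  have intG2: "integrable (lborel \<Otimes>\<^sub>M lborel) G" using intG by (simp add: lborel_prod)
  have inner1: "(\<integral>x. F (x, t) \<partial>lborel) = (\<integral>y. G (y, t) \<partial>lborel)" for t
  proof -
    have "(\<integral>x. F (x, t) \<partial>lborel) = \<bar>1\<bar> *\<^sub>R (\<integral>y. F (X t + 1 * y, t) \<partial>lborel)"
      by (rule lborel_integral_real_affine) simp
    also have "\<dots> = (\<integral>y. G (y, t) \<partial>lborel)"
      by (simp add: F_def G_def add.commute)
    finally show ?thesis .
  qed
  have inner2: "(\<integral>t. G (y, t) \<partial>lborel) = - g 0 * (indicator A y * \<psi> (y, 0))" for y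
  proof -
    define T where "T = R + 1"
    have T: "0 \<le> T" "R < T" using R(2) unfolding T_def by auto
    define K where "K = (\<lambda>t. H (y + X t, t))"
    have GK: "G (y, t) = indicator A y * (indicator {0..T} t *\<^sub>R K t)" for t
    proof (cases "T < t")
      case True
      have "R < norm (y + X t, t)" using norm_snd_le[of t "y + X t"] True T by simp
      then show ?thesis using True T zH unfolding G_def K_def by (simp add: add.commute)
    next
      case False
      then show ?thesis unfolding G_def K_def by (simp add: add.commute indicator_def)
    qed
    have dK: "((\<lambda>s. g s * \<psi> (y + X s, s)) has_real_derivative K s) (at s)" for s
      by (rule DERIV_cong[OF DERIV_mult[OF dg psi_chain[OF sm dX]]])
         (simp add: K_def H_def algebra_simps)
    have cK: "continuous_on {0..T} K"
    proof -
      have "continuous_on UNIV ((\<lambda>p. H (fst p + X (snd p), snd p)) \<circ> (\<lambda>t. (y, t)))"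
        by (rule continuous_on_compose) (auto intro: continuous_intros continuous_on_subset[OF cHX])
      then have "continuous_on UNIV K" by (simp add: K_def o_def)
      then show ?thesis by (rule continuous_on_subset) auto
    qed
    have "(\<integral>t. indicator {0..T} t *\<^sub>R K t \<partial>lborel)
        = g T * \<psi> (y + X T, T) - g 0 * \<psi> (y + X 0, 0)"
      by (rule integral_FTC_atLeastAtMost[OF T(1) _ cK])
         (use dK in \<open>auto simp: has_real_derivative_iff_has_vector_derivative intro: has_vector_derivative_at_within\<close>)
    also have "\<psi> (y + X T, T) = 0"
      using z norm_snd_le[of T "y + X T"] T by force
    finally have "(\<integral>t. indicator {0..T} t *\<^sub>R K t \<partial>lborel) = - g 0 * \<psi> (y, 0)"
      using X0 by simp
    then show ?thesis unfolding GK by simp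
  qed
  have "integral\<^sup>L lborel F = integral\<^sup>L (lborel \<Otimes>\<^sub>M lborel) F" by (simp add: lborel_prod)
  also have "\<dots> = (\<integral>t. (\<integral>x. F (x, t) \<partial>lborel) \<partial>lborel)"
    using lborel_pair.integral_snd[of "\<lambda>x t. F (x, t)"] intF2 by simp
  also have "\<dots> = (\<integral>t. (\<integral>y. G (y, t) \<partial>lborel) \<partial>lborel)"
    by (simp add: inner1)
  also have "\<dots> = integral\<^sup>L (lborel \<Otimes>\<^sub>M lborel) G"
    using lborel_pair.integral_snd[of "\<lambda>x t. G (x, t)"] intG2 by simp
  also have "\<dots> = (\<integral>y. (\<integral>t. G (y, t) \<partial>lborel) \<partial>lborel)"
    using lborel_pair.integral_fst[of "\<lambda>x t. G (x, t)"] intG2 by simp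
  also have "\<dots> = (\<integral>y. - g 0 * (indicator A y * \<psi> (y, 0)) \<partial>lborel)"
    by (simp add: inner2)
  also have "\<dots> = - g 0 * (LINT x|lborel. indicator A x * \<psi> (x, 0))"
    by simp
  finally show "integral\<^sup>L lborel F = - g 0 * (LINT x|lborel. indicator A x * \<psi> (x, 0))" .
qed

theorem mainTheorem11:
  fixes \<mu> ua \<alpha>m \<alpha>p um up :: real
  assumes "\<mu> > 0" and "\<alpha>m \<ge> 0" and "\<alpha>p \<ge> 0" and "um < up"
  defines "ul \<equiv> \<lambda>t. ua + (um - ua) * exp (- \<mu> * t)"
      and "ur \<equiv> \<lambda>t. ua + (up - ua) * exp (- \<mu> * t)"
      and "X1 \<equiv> \<lambda>t. ua * t + (ua - um) * (exp (- \<mu> * t) - 1) / \<mu>"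
      and "X2 \<equiv> \<lambda>t. ua * t + (ua - up) * (exp (- \<mu> * t) - 1) / \<mu>"
      and "ubar \<equiv> \<lambda>x t. ua + \<mu> * (x - ua * t) / (exp (\<mu> * t) - 1)"
  shows "weak_solution \<mu> ua
           (\<lambda>x. if x < 0 then \<alpha>m else \<alpha>p)
           (\<lambda>x. if x < 0 then um else up)
           (\<lambda>(x, t). if x < X1 t then \<alpha>m else if x \<le> X2 t then 0 else \<alpha>p)
           (\<lambda>(x, t). if x < X1 t then ul t else if x \<le> X2 t then ubar x t else ur t)"
proof -
  let ?\<alpha> = "(\<lambda>(x, t). if x < X1 t then \<alpha>m else if x \<le> X2 t then 0 else \<alpha>p) :: real \<times> real \<Rightarrow> real"
  let ?u = "(\<lambda>(x, t). if x < X1 t then ul t else if x \<le> X2 t then ubar x t else ur t) :: real \<times> real \<Rightarrow> real"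
  have dX1: "(X1 has_real_derivative ul t) (at t)" for t
    unfolding X1_def ul_def using assms(1)
    by (auto intro!: derivative_eq_intros simp: field_simps)
  have dX2: "(X2 has_real_derivative ur t) (at t)" for t
    unfolding X2_def ur_def using assms(1)
    by (auto intro!: derivative_eq_intros simp: field_simps)
  have dul: "(ul has_real_derivative \<mu> * (ua - ul t)) (at t)" for t
    unfolding ul_def using assms(1)
    by (auto intro!: derivative_eq_intros simp: field_simps)
  have dur: "(ur has_real_derivative \<mu> * (ua - ur t)) (at t)" for t
    unfolding ur_def using assms(1)
    by (auto intro!: derivative_eq_intros simp: field_simps)
  have cul: "continuous_on UNIV ul" unfolding ul_def by (intro continuous_intros)
  have cur: "continuous_on UNIV ur" unfolding ur_def by (intro continuous_intros)
  have cul': "continuous_on UNIV (\<lambda>t. \<mu> * (ua - ul t))" using cul by (intro continuous_intros)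
  have cur': "continuous_on UNIV (\<lambda>t. \<mu> * (ua - ur t))" using cur by (intro continuous_intros)
  have X10: "X1 0 = 0" and X20: "X2 0 = 0" unfolding X1_def X2_def by simp_all
  have ul0: "ul 0 = um" and ur0: "ur 0 = up" unfolding ul_def ur_def by simp_all
  have X12: "X1 t \<le> X2 t" if "0 \<le> t" for t
  proof -
    have "exp (- \<mu> * t) \<le> 1" using that assms(1) by simp
    then have "(up - um) * (1 - exp (- \<mu> * t)) / \<mu> \<ge> 0" using assms(1,4) by simp
    moreover have "X2 t - X1 t = (up - um) * (1 - exp (- \<mu> * t)) / \<mu>"
      unfolding X1_def X2_def using assms(1) by (simp add: field_simps)
    ultimately show ?thesis by simp
  qed
  have bA: "{..<0::real} \<in> sets borel" "{(0::real)<..} \<in> sets borel" by auto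
  have d1: "((\<lambda>_. 1::real) has_real_derivative 0) (at t)" for t by simp
  have c0: "continuous_on UNIV (\<lambda>_. 0::real)" by simp
  have AE0: "AE x in lborel. x \<noteq> (0::real)" by (rule AE_lborel_singleton)
  show ?thesis
    unfolding weak_solution_def
  proof (intro allI impI conjI)
    fix \<psi> assume tf: "test_fun \<psi>"
    note KL1 = key[where A="{..<0}" and X=X1 and v=ul and g="\<lambda>_. 1" and g'="\<lambda>_. 0", OF tf bA(1) X10 dX1 cul d1 c0]
    note KR1 = key[where A="{0<..}" and X=X2 and v=ur and g="\<lambda>_. 1" and g'="\<lambda>_. 0", OF tf bA(2) X20 dX2 cur d1 c0]
    note KL2 = key[where A="{..<0}" and X=X1 and v=ul and g=ul and g'="\<lambda>t. \<mu> * (ua - ul t)", OF tf bA(1) X10 dX1 cul dul cul']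
    note KR2 = key[where A="{0<..}" and X=X2 and v=ur and g=ur and g'="\<lambda>t. \<mu> * (ua - ur t)", OF tf bA(2) X20 dX2 cur dur cur']
    define FL1 where "FL1 = (\<lambda>p. indicator {0..} (snd p) * indicator {..<0} (fst p - X1 (snd p)) * (1 * partial_t \<psi> p + 1 * ul (snd p) * partial_x \<psi> p + 0 * \<psi> p))"
    define FR1 where "FR1 = (\<lambda>p. indicator {0..} (snd p) * indicator {0<..} (fst p - X2 (snd p)) * (1 * partial_t \<psi> p + 1 * ur (snd p) * partial_x \<psi> p + 0 * \<psi> p))"
    define FL2 where "FL2 = (\<lambda>p. indicator {0..} (snd p) * indicator {..<0} (fst p - X1 (snd p)) * (ul (snd p) * partial_t \<psi> p + ul (snd p) * ul (snd p) * partial_x \<psi> p + \<mu> * (ua - ul (snd p)) * \<psi> p))"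
    define FR2 where "FR2 = (\<lambda>p. indicator {0..} (snd p) * indicator {0<..} (fst p - X2 (snd p)) * (ur (snd p) * partial_t \<psi> p + ur (snd p) * ur (snd p) * partial_x \<psi> p + \<mu> * (ua - ur (snd p)) * \<psi> p))"
    have iL1: "integrable lborel FL1" and eL1: "integral\<^sup>L lborel FL1 = - 1 * (LINT x|lborel. indicator {..<0} x * \<psi> (x, 0))"
      using KL1 unfolding FL1_def by auto
    have iR1: "integrable lborel FR1" and eR1: "integral\<^sup>L lborel FR1 = - 1 * (LINT x|lborel. indicator {0<..} x * \<psi> (x, 0))"
      using KR1 unfolding FR1_def by auto
    have iL2: "integrable lborel FL2" and eL2: "integral\<^sup>L lborel FL2 = - um * (LINT x|lborel. indicator {..<0} x * \<psi> (x, 0))"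
      using KL2 ul0 unfolding FL2_def by auto
    have iR2: "integrable lborel FR2" and eR2: "integral\<^sup>L lborel FR2 = - up * (LINT x|lborel. indicator {0<..} x * \<psi> (x, 0))"
      using KR2 ur0 unfolding FR2_def by auto
    have i0L: "integrable lborel (\<lambda>x. indicator {..<0} x * \<psi> (x, 0))" using KL1 by auto
    have i0R: "integrable lborel (\<lambda>x. indicator {0<..} x * \<psi> (x, 0))" using KR1 by auto
    have pw1: "indicator (UNIV \<times> {0..}) p *\<^sub>R (?\<alpha> p * partial_t \<psi> p + ?\<alpha> p * ?u p * partial_x \<psi> p)
        = \<alpha>m * FL1 p + \<alpha>p * FR1 p" for p
    proof -
      obtain x t where p: "p = (x, t)" by (cases p)
      show ?thesis unfolding p FL1_def FR1_def
        by (cases "t < 0"; cases "x < X1 t"; cases "x \<le> X2 t") (use X12[of t] in \<open>auto simp: indicator_def algebra_simps\<close>)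
    qed
    have pw2: "indicator (UNIV \<times> {0..}) p *\<^sub>R (?\<alpha> p * ?u p * partial_t \<psi> p + ?\<alpha> p * (?u p)\<^sup>2 * partial_x \<psi> p
              + \<mu> * ?\<alpha> p * (ua - ?u p) * \<psi> p)
        = \<alpha>m * FL2 p + \<alpha>p * FR2 p" for p
    proof -
      obtain x t where p: "p = (x, t)" by (cases p)
      show ?thesis unfolding p FL2_def FR2_def
        by (cases "t < 0"; cases "x < X1 t"; cases "x \<le> X2 t") (use X12[of t] in \<open>auto simp: indicator_def power2_eq_square algebra_simps\<close>)
    qed
    have c\<psi>0: "continuous_on UNIV (\<lambda>x. \<psi> (x, 0))"
      using tf unfolding test_fun_def
      by (intro continuous_on_compose2[OF smooth2_D(1)]) (auto intro: continuous_intros)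
    have mp0[measurable]: "(\<lambda>x. \<psi> (x, 0)) \<in> borel_measurable borel"
      by (rule borel_measurable_continuous_onI[OF c\<psi>0])
    have rhs1: "(LINT x|lborel. (if x < 0 then \<alpha>m else \<alpha>p) * \<psi> (x, 0))
        = (LINT x|lborel. \<alpha>m * (indicator {..<0} x * \<psi> (x, 0)) + \<alpha>p * (indicator {0<..} x * \<psi> (x, 0)))"
      by (rule integral_cong_AE, measurable, measurable) (use AE0 in \<open>eventually_elim, auto simp: indicator_def\<close>)
    have rhs2: "(LINT x|lborel. (if x < 0 then \<alpha>m else \<alpha>p) * (if x < 0 then um else up) * \<psi> (x, 0))
        = (LINT x|lborel. \<alpha>m * um * (indicator {..<0} x * \<psi> (x, 0)) + \<alpha>p * up * (indicator {0<..} x * \<psi> (x, 0)))"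
      by (rule integral_cong_AE, measurable, measurable) (use AE0 in \<open>eventually_elim, auto simp: indicator_def\<close>)
    show "set_lebesgue_integral lborel (UNIV \<times> {0..}) (\<lambda>p. ?\<alpha> p * partial_t \<psi> p + ?\<alpha> p * ?u p * partial_x \<psi> p)
        = - (LINT x|lborel. (if x < 0 then \<alpha>m else \<alpha>p) * \<psi> (x, 0))"
      unfolding set_lebesgue_integral_def pw1 rhs1
      using iL1 iR1 eL1 eR1 i0L i0R by simp
    show "set_lebesgue_integral lborel (UNIV \<times> {0..}) (\<lambda>p. ?\<alpha> p * ?u p * partial_t \<psi> p + ?\<alpha> p * (?u p)\<^sup>2 * partial_x \<psi> p
              + \<mu> * ?\<alpha> p * (ua - ?u p) * \<psi> p)
        = - (LINT x|lborel. (if x < 0 then \<alpha>m else \<alpha>p) * (if x < 0 then um else up) * \<psi> (x, 0))"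
      unfolding set_lebesgue_integral_def pw2 rhs2
      using iL2 iR2 eL2 eR2 i0L i0R by (simp add: algebra_simps)
  qed
qed

end
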